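(* Let $O,M^\star,\hat E\in\mathbb R^{n\times T}$, $Z_1,\dots,Z_k\in\mathbb R^{n\times T}$ and $\tau^\star\in\mathbb R^k$ satisfy $O=M^\star+\sum_{i=1}^k\tau^\star_iZ_i+\hat E$, and let $\lambda>0$. Suppose $(\hat M,\hat m,\hat\tau)$ is a minimizer of $$\min_{M\in\mathbb R^{n\times T},\tau\in\mathbb R^k,m\in\mathbb R^n}\ \frac12\Big\|O-M-m\mathbf 1^\top-\sum_{i=1}^k\tau_iZ_i\Big\|_F^2+\lambda\|M\|_\star .$$ Let $\hat M=\hat U\hat\Sigma\hat V^\top$ be the SVD of $\hat M$ and let $\hat{\mathbf T}=\{\hat UA^\top+B\hat V^\top+v\mathbf 1^\top: A,B,v\}$ be the span of the tangent space of $\hat M$ and $\{v\mathbf 1^\top:v\in\mathbb R^n\}$. Then $$D(\hat\tau-\tau^\star)=\Delta^1+\Delta^2+\Delta^3,$$ where $D\in\mathbb R^{k\times k}$ has entries $D_{ij}=\langle P_{\hat{\mathbf T}^\perp}(Z_i),P_{\hat{\mathbf T}^\perp}(Z_j)\rangle$ and $\Delta^1,\Delta^2,\Delta^3\in\mathbb R^k$ have components $\Delta^1_i=\lambda\langle Z_i,\hat U\hat V^\top\rangle$, $\Delta^2_i=\langle Z_i,P_{\hat{\mathbf T}^\perp}(\hat E)\rangle$, $\Delta^3_i=\langle Z_i,P_{\hat{\mathbf T}^\perp}(M^\star)\rangle$.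
   Context: $\|\cdot\|_F$ is the Frobenius norm, $\|\cdot\|_\star$ the nuclear norm, $\langle\cdot,\cdot\rangle$ the Frobenius inner product, $\mathbf 1$ the all-ones vector in $\mathbb R^T$, and $P_{\hat{\mathbf T}^\perp}$ the orthogonal projection onto the orthogonal complement of $\hat{\mathbf T}$. The SVD is the compact SVD ($\hat U,\hat V$ with orthonormal columns, $\hat\Sigma$ diagonal positive). *)

theory Defs
  imports "HOL-Analysis.Analysis"
begin

text \<open>Matrices in R^(n x T) are modelled as real^'t^'n (row index 'n, column index 't).
  On this type the library inner product and norm are exactly the Frobenius
  inner product and the Frobenius norm.\<close>

definition outer :: "real^'n \<Rightarrow> real^'t \<Rightarrow> real^'t^'n" where
  "outer u v = (\<chi> i j. u $ i * v $ j)"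

definition ones :: "real^'t" where
  "ones = (\<chi> j. 1)"

definition compact_svd ::
  "real^'t^'n \<Rightarrow> nat \<Rightarrow> (nat \<Rightarrow> real^'n) \<Rightarrow> (nat \<Rightarrow> real) \<Rightarrow> (nat \<Rightarrow> real^'t) \<Rightarrow> bool" where
  "compact_svd M r u s v \<longleftrightarrow>
     (\<forall>l<r. \<forall>l'<r. u l \<bullet> u l' = (if l = l' then 1 else 0)) \<and>
     (\<forall>l<r. \<forall>l'<r. v l \<bullet> v l' = (if l = l' then 1 else 0)) \<and>
     (\<forall>l<r. s l > 0) \<and>
     M = (\<Sum>l<r. s l *\<^sub>R outer (u l) (v l))"

definition nuclear_norm :: "real^'t^'n \<Rightarrow> real" where
  "nuclear_norm M = (THE x. \<exists>r u s v. compact_svd M r u s v \<and> x = (\<Sum>l<r. s l))"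

definition orth_compl :: "'a::real_inner set \<Rightarrow> 'a set" where
  "orth_compl S = {y. \<forall>x\<in>S. y \<bullet> x = 0}"

definition orth_proj :: "'a::real_inner set \<Rightarrow> 'a \<Rightarrow> 'a" where
  "orth_proj S x = (THE p. p \<in> S \<and> (\<forall>y\<in>S. (x - p) \<bullet> y = 0))"

text \<open>Span of the tangent space of M = U Sigma V^T and of the matrices v 1^T:
  { U A^T + B V^T + v 1^T }.\<close>
definition tangent_T ::
  "nat \<Rightarrow> (nat \<Rightarrow> real^'n) \<Rightarrow> (nat \<Rightarrow> real^'t) \<Rightarrow> (real^'t^'n) set" where
  "tangent_T r u v = {(\<Sum>l<r. outer (u l) (a l)) + (\<Sum>l<r. outer (b l) (v l)) + outer w ones
                      | a b w. True}"

definition objective ::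
  "real^'t^'n \<Rightarrow> ('k \<Rightarrow> real^'t^'n) \<Rightarrow> real \<Rightarrow> real^'t^'n \<Rightarrow> real^'n \<Rightarrow> real^'k::finite \<Rightarrow> real" where
  "objective Obs Z lam M m \<tau> =
     (1/2) * (norm (Obs - M - outer m ones - (\<Sum>i\<in>UNIV. \<tau> $ i *\<^sub>R Z i)))\<^sup>2 + lam * nuclear_norm M"

end

theory Submission
  imports Defs
begin


lemma outer_component: "outer u v $ i $ j = u $ i * v $ j"
  by (simp add: outer_def)

lemma outer_inner: "outer a b \<bullet> outer c d = (a \<bullet> c) * (b \<bullet> d)"
  by (simp add: outer_def inner_vec_def sum_distrib_left sum_distrib_right mult_ac)

lemma outer_add_left: "outer (a + b) c = outer a c + outer b c"
  by (simp add: outer_def vec_eq_iff algebra_simps)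
lemma outer_add_right: "outer c (a + b) = outer c a + outer c b"
  by (simp add: outer_def vec_eq_iff algebra_simps)
lemma outer_scale_left: "outer (k *\<^sub>R a) c = k *\<^sub>R outer a c"
  by (simp add: outer_def vec_eq_iff algebra_simps)
lemma outer_scale_right: "outer c (k *\<^sub>R a) = k *\<^sub>R outer c a"
  by (simp add: outer_def vec_eq_iff algebra_simps)
lemma outer_zero_left[simp]: "outer 0 c = 0"
  by (simp add: outer_def vec_eq_iff)
lemma outer_zero_right[simp]: "outer c 0 = 0"
  by (simp add: outer_def vec_eq_iff)
lemma outer_mult: "outer a b *v x = (b \<bullet> x) *\<^sub>R a"
  by (simp add: outer_def matrix_vector_mult_def vec_eq_iff inner_vec_def sum_distrib_left mult_ac)

lemma sum_mult_vec: "(\<Sum>l\<in>L. f l) *v (x::real^'a) = (\<Sum>l\<in>L. f l *v x)"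
  by (induct L rule: infinite_finite_induct) (auto simp: matrix_vector_mult_add_rdistrib)

lemma quad_zero:
  fixes a K :: real
  assumes "\<And>t. 0 \<le> t * a + t\<^sup>2 * K"
  shows "a = 0"
proof (rule ccontr)
  assume "a \<noteq> 0"
  define t where "t = - a / (2 * (\<bar>K\<bar> + 1))"
  have pos: "\<bar>K\<bar> + 1 > 0" by simp
  have "t * a = - a\<^sup>2 / (2 * (\<bar>K\<bar> + 1))" by (simp add: t_def power2_eq_square)
  moreover have "t\<^sup>2 * K \<le> t\<^sup>2 * \<bar>K\<bar>" by (simp add: mult_left_mono)
  moreover have "t\<^sup>2 * \<bar>K\<bar> = a\<^sup>2 * \<bar>K\<bar> / (4 * (\<bar>K\<bar> + 1)\<^sup>2)"
    by (simp add: t_def power_divide power_mult_distrib)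
      (simp add: power2_eq_square ring_distribs)
  moreover have "a\<^sup>2 * \<bar>K\<bar> / (4 * (\<bar>K\<bar> + 1)\<^sup>2) < a\<^sup>2 / (2 * (\<bar>K\<bar> + 1))"
  proof -
    have a2: "a\<^sup>2 > 0" using \<open>a \<noteq> 0\<close> by simp
    have kk: "\<bar>K\<bar> * (2 * (\<bar>K\<bar> + 1)) < 4 * (\<bar>K\<bar> + 1)\<^sup>2"
    proof -
      have h1: "4 * (\<bar>K\<bar> + 1)\<^sup>2 - \<bar>K\<bar> * (2 * (\<bar>K\<bar> + 1)) = 2 * (\<bar>K\<bar> + 1) * (\<bar>K\<bar> + 2)"
        by (simp add: power2_eq_square algebra_simps)
      have h2: "0 < 2 * (\<bar>K\<bar> + 1) * (\<bar>K\<bar> + 2)"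
        by (intro mult_pos_pos) auto
      show ?thesis using h1 h2 by linarith
    qed
    have "a\<^sup>2 * (\<bar>K\<bar> * (2 * (\<bar>K\<bar> + 1))) < a\<^sup>2 * (4 * (\<bar>K\<bar> + 1)\<^sup>2)"
      using mult_strict_left_mono[OF kk a2] .
    then have "a\<^sup>2 * \<bar>K\<bar> * (2 * (\<bar>K\<bar> + 1)) < a\<^sup>2 * (4 * (\<bar>K\<bar> + 1)\<^sup>2)"
      by (simp add: mult.assoc)
    then show ?thesis using pos by (simp add: divide_simps)
  qed
  ultimately have "t * a + t\<^sup>2 * K < 0" by linarith
  with assms[of t] show False by linarith
qed



definition orthon :: "nat \<Rightarrow> (nat \<Rightarrow> 'a::real_inner) \<Rightarrow> bool" where
  "orthon r u \<longleftrightarrow> (\<forall>l<r. \<forall>l'<r. u l \<bullet> u l' = (if l = l' then 1 else 0))"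

lemma orthon_sum_left:
  assumes "orthon r u" "l < r"
  shows "(\<Sum>l'<r. (u l' \<bullet> u l) * f l') = f l"
proof -
  have "(\<Sum>l'<r. (u l' \<bullet> u l) * f l') = (\<Sum>l'<r. if l' = l then f l' else 0)"
    using assms by (intro sum.cong) (auto simp: orthon_def)
  then show ?thesis using assms by simp
qed

lemma orthon_sum_right:
  assumes "orthon r u" "l < r"
  shows "(\<Sum>l'<r. (u l \<bullet> u l') * f l') = f l"
  using orthon_sum_left[OF assms, of f] by (simp add: inner_commute)

lemma orthon_norm2:
  assumes "orthon r u"
  shows "(norm (\<Sum>l<r. c l *\<^sub>R u l))\<^sup>2 = (\<Sum>l<r. (c l)\<^sup>2)"
proof -
  have "(norm (\<Sum>l<r. c l *\<^sub>R u l))\<^sup>2 = (\<Sum>l<r. \<Sum>l'<r. c l * (c l' * (u l' \<bullet> u l)))"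
    by (simp add: power2_norm_eq_inner inner_sum_left inner_sum_right sum_distrib_left mult_ac)
  also have "\<dots> = (\<Sum>l<r. c l * (\<Sum>l'<r. (u l' \<bullet> u l) * c l'))"
    by (simp add: sum_distrib_left mult_ac)
  also have "\<dots> = (\<Sum>l<r. c l * c l)"
    using orthon_sum_left[OF assms] by (intro sum.cong) auto
  finally show ?thesis by (simp add: power2_eq_square)
qed

lemma bessel:
  assumes "orthon r u"
  shows "(\<Sum>l<r. (y \<bullet> u l)\<^sup>2) \<le> (norm y)\<^sup>2"
proof -
  define z where "z = (\<Sum>l<r. (y \<bullet> u l) *\<^sub>R u l)"
  have yz: "y \<bullet> z = (\<Sum>l<r. (y \<bullet> u l)\<^sup>2)"
    by (simp add: z_def inner_sum_right power2_eq_square)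
  have zz: "z \<bullet> z = (\<Sum>l<r. (y \<bullet> u l)\<^sup>2)"
    using orthon_norm2[OF assms, of "\<lambda>l. y \<bullet> u l"] by (simp add: z_def power2_norm_eq_inner)
  have "0 \<le> (y - z) \<bullet> (y - z)" by simp
  also have "\<dots> = y \<bullet> y - 2 * (y \<bullet> z) + z \<bullet> z"
    by (simp add: inner_diff_left inner_diff_right inner_commute)
  finally show ?thesis using yz zz by (simp add: power2_norm_eq_inner)
qed

lemma bilin_bound:
  assumes "orthon r u" "orthon r v"
  shows "(\<Sum>l<r. (x \<bullet> u l) * (y \<bullet> v l)) \<le> norm x * norm y"
proof -
  define z where "z = (\<Sum>l<r. (y \<bullet> v l) *\<^sub>R u l)"
  have "(\<Sum>l<r. (x \<bullet> u l) * (y \<bullet> v l)) = x \<bullet> z"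
    by (simp add: z_def inner_sum_right mult_ac)
  also have "\<dots> \<le> norm x * norm z" by (rule norm_cauchy_schwarz)
  also have "norm z \<le> norm y"
  proof -
    have "(norm z)\<^sup>2 \<le> (norm y)\<^sup>2"
      using orthon_norm2[OF assms(1), of "\<lambda>l. y \<bullet> v l"] bessel[OF assms(2), of y]
      by (simp add: z_def)
    then show ?thesis by (rule power2_le_imp_le) simp
  qed
  then have "norm x * norm z \<le> norm x * norm y" by (simp add: mult_left_mono)
  finally show ?thesis .
qed

lemma svd_parts:
  assumes "compact_svd M r u s v"
  shows "orthon r u" "orthon r v" "\<And>l. l < r \<Longrightarrow> s l > 0" "M = (\<Sum>l<r. s l *\<^sub>R outer (u l) (v l))"
  using assms by (auto simp: compact_svd_def orthon_def)

lemma atomic_bound: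
  assumes svd: "compact_svd M r u s v"
    and dec: "M = (\<Sum>k<p. outer (x k) (y k))"
  shows "(\<Sum>l<r. s l) \<le> (\<Sum>k<p. norm (x k) * norm (y k))"
proof -
  note sp = svd_parts[OF svd]
  define W where "W = (\<Sum>l<r. outer (u l) (v l))"
  have "M \<bullet> W = (\<Sum>l<r. \<Sum>l'<r. s l' * ((u l' \<bullet> u l) * (v l' \<bullet> v l)))"
    by (simp add: sp(4) W_def inner_sum_left inner_sum_right outer_inner)
  also have "\<dots> = (\<Sum>l<r. s l)"
  proof (intro sum.cong refl)
    fix l assume l: "l \<in> {..<r}"
    have "(\<Sum>l'<r. s l' * ((u l' \<bullet> u l) * (v l' \<bullet> v l))) = (\<Sum>l'<r. (u l' \<bullet> u l) * (s l' * (v l' \<bullet> v l)))"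
      by (simp add: mult_ac)
    also have "\<dots> = s l * (v l \<bullet> v l)"
      using orthon_sum_left[OF sp(1), of l "\<lambda>l'. s l' * (v l' \<bullet> v l)"] l by simp
    also have "\<dots> = s l" using sp(2) l by (auto simp: orthon_def)
    finally show "(\<Sum>l'<r. s l' * ((u l' \<bullet> u l) * (v l' \<bullet> v l))) = s l" .
  qed
  finally have MW: "M \<bullet> W = (\<Sum>l<r. s l)" .
  have "M \<bullet> W = (\<Sum>k<p. \<Sum>l<r. (x k \<bullet> u l) * (y k \<bullet> v l))"
    by (simp add: dec W_def inner_sum_left inner_sum_right outer_inner) (rule sum.swap)
  also have "\<dots> \<le> (\<Sum>k<p. norm (x k) * norm (y k))"
    by (intro sum_mono bilin_bound sp)
  finally show ?thesis using MW by simp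
qed

lemma svd_as_atomic:
  assumes "compact_svd M r u s v"
  shows "M = (\<Sum>l<r. outer (s l *\<^sub>R u l) (v l))"
    "(\<Sum>l<r. norm (s l *\<^sub>R u l) * norm (v l)) = (\<Sum>l<r. s l)"
proof -
  note sp = svd_parts[OF assms]
  show "M = (\<Sum>l<r. outer (s l *\<^sub>R u l) (v l))" by (simp add: sp(4) outer_scale_left)
  show "(\<Sum>l<r. norm (s l *\<^sub>R u l) * norm (v l)) = (\<Sum>l<r. s l)"
  proof (intro sum.cong refl)
    fix l assume l: "l \<in> {..<r}"
    have "norm (u l) = 1" using sp(1) l by (auto simp: orthon_def norm_eq_sqrt_inner)
    moreover have "norm (v l) = 1" using sp(2) l by (auto simp: orthon_def norm_eq_sqrt_inner)
    moreover have "s l > 0" using sp(3) l by auto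
    ultimately show "norm (s l *\<^sub>R u l) * norm (v l) = s l" by simp
  qed
qed

lemma nn_eq:
  assumes "compact_svd M r u s v"
  shows "nuclear_norm M = (\<Sum>l<r. s l)"
  unfolding nuclear_norm_def
proof (rule the_equality)
  show "\<exists>r' u' s' v'. compact_svd M r' u' s' v' \<and> (\<Sum>l<r. s l) = (\<Sum>l<r'. s' l)"
    using assms by (intro exI conjI) (assumption, rule refl)
next
  fix x assume "\<exists>r' u' s' v'. compact_svd M r' u' s' v' \<and> x = (\<Sum>l<r'. s' l)"
  then obtain r' u' s' v' where s2: "compact_svd M r' u' s' v'" and x: "x = (\<Sum>l<r'. s' l)" by blast
  have "(\<Sum>l<r. s l) \<le> x"
    using atomic_bound[OF assms svd_as_atomic(1)[OF s2]] svd_as_atomic(2)[OF s2] x by simp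
  moreover have "x \<le> (\<Sum>l<r. s l)"
    using atomic_bound[OF s2 svd_as_atomic(1)[OF assms]] svd_as_atomic(2)[OF assms] x by simp
  ultimately show "x = (\<Sum>l<r. s l)" by simp
qed



lemma scaleR_mat_vec: "(c *\<^sub>R A) *v (x::real^'a) = c *\<^sub>R (A *v x)"
  by (simp add: matrix_vector_mult_def vec_eq_iff sum_distrib_left mult_ac)

lemma norm_add_scale2:
  fixes a b :: "'a::real_inner"
  shows "(norm (a + t *\<^sub>R b))\<^sup>2 = (norm a)\<^sup>2 + 2 * t * (a \<bullet> b) + t\<^sup>2 * (norm b)\<^sup>2"
  unfolding power2_norm_eq_inner
  by (simp add: inner_add_left inner_add_right inner_commute algebra_simps power2_eq_square)

lemma svd_mult:
  assumes "compact_svd M r u s v" "l < r"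
  shows "M *v v l = s l *\<^sub>R u l"
    "\<And>x. u l \<bullet> (M *v x) = s l * (v l \<bullet> x)"
proof -
  note sp = svd_parts[OF assms(1)]
  have "M *v v l = (\<Sum>l'<r. ((v l' \<bullet> v l) * s l') *\<^sub>R u l')"
    by (simp add: sp(4) sum_mult_vec outer_mult scaleR_mat_vec mult_ac)
  also have "\<dots> = (\<Sum>l'<r. if l' = l then s l *\<^sub>R u l else 0)"
    using sp(2) assms(2) by (intro sum.cong) (auto simp: orthon_def)
  finally show "M *v v l = s l *\<^sub>R u l" using assms(2) by simp
  fix x
  have "u l \<bullet> (M *v x) = (\<Sum>l'<r. (u l \<bullet> u l') * (s l' * (v l' \<bullet> x)))"
    by (simp add: sp(4) sum_mult_vec outer_mult scaleR_mat_vec inner_sum_right mult_ac)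
  also have "\<dots> = s l * (v l \<bullet> x)"
    using orthon_sum_right[OF sp(1) assms(2)] by simp
  finally show "u l \<bullet> (M *v x) = s l * (v l \<bullet> x)" .
qed

lemma svd_exists_aux:
  fixes M :: "real^'t::finite^'n::finite"
  shows "dim (range (\<lambda>x. M *v x)) \<le> d \<Longrightarrow> \<exists>r u s v. compact_svd M r u s v"
proof (induction d arbitrary: M rule: less_induct)
  case (less d)
  show ?case
  proof (cases "M = 0")
    case True
    then have "compact_svd M 0 (\<lambda>_. 0) (\<lambda>_. 0) (\<lambda>_. 0)" by (simp add: compact_svd_def)
    then show ?thesis by blast
  next
    case False
    have cont: "continuous_on (sphere 0 1) (\<lambda>x::real^'t. norm (M *v x))"
      by (intro continuous_intros)
    obtain v where v1: "v \<in> sphere (0::real^'t) 1"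
      and vmax: "\<And>y. y \<in> sphere 0 1 \<Longrightarrow> norm (M *v y) \<le> norm (M *v v)"
      using continuous_attains_sup[OF compact_sphere _ cont] by fastforce
    have nv: "norm v = 1" using v1 by simp
    define \<sigma> where "\<sigma> = norm (M *v v)"
    have bound: "norm (M *v x) \<le> \<sigma> * norm x" for x
    proof (cases "x = 0")
      case False
      then have "norm (M *v ((1 / norm x) *\<^sub>R x)) \<le> \<sigma>"
        using vmax[of "(1 / norm x) *\<^sub>R x"] by (simp add: \<sigma>_def)
      then show ?thesis using False by (simp add: matrix_vector_mult_scaleR field_simps)
    qed simp
    obtain x where "M *v x \<noteq> 0" using False matrix_eq[of M 0] by auto
    note Mx = this
    have "\<sigma> \<ge> 0" unfolding \<sigma>_def by simp
    moreover have "\<sigma> \<noteq> 0"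
    proof
      assume "\<sigma> = 0"
      then have "norm (M *v x) \<le> 0" using bound[of x] by simp
      then show False using Mx by simp
    qed
    ultimately have "\<sigma> > 0" by simp
    have orth: "(M *v v) \<bullet> (M *v w) = 0" if w: "v \<bullet> w = 0" for w
    proof -
     have "-2 * ((M *v v) \<bullet> (M *v w)) = 0"
     proof (rule quad_zero[of "-2 * ((M *v v) \<bullet> (M *v w))" "\<sigma>\<^sup>2 * (norm w)\<^sup>2 - (norm (M *v w))\<^sup>2"], goal_cases)
      case (1 t)
      have "(norm (M *v (v + t *\<^sub>R w)))\<^sup>2 \<le> (\<sigma> * norm (v + t *\<^sub>R w))\<^sup>2"
        using bound[of "v + t *\<^sub>R w"] by (simp add: power_mono)
      moreover have "(norm (M *v (v + t *\<^sub>R w)))\<^sup>2 = \<sigma>\<^sup>2 + 2 * t * ((M *v v) \<bullet> (M *v w)) + t\<^sup>2 * (norm (M *v w))\<^sup>2"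
        by (simp add: \<sigma>_def matrix_vector_right_distrib matrix_vector_mult_scaleR norm_add_scale2)
      moreover have "(\<sigma> * norm (v + t *\<^sub>R w))\<^sup>2 = \<sigma>\<^sup>2 * (1 + t\<^sup>2 * (norm w)\<^sup>2)"
        using w nv by (simp add: power_mult_distrib norm_add_scale2)
      ultimately show ?case by (simp add: algebra_simps)
     qed
     then show ?thesis by simp
    qed
    define M' where "M' = M - outer (M *v v) v"
    have vv: "v \<bullet> v = 1" using nv by (simp add: norm_eq_sqrt_inner)
    have M'x: "M' *v x = M *v (x - (v \<bullet> x) *\<^sub>R v)" for x
      by (simp add: M'_def matrix_vector_mult_diff_rdistrib outer_mult matrix_vector_mult_diff_distrib matrix_vector_mult_scaleR)
    have M'v: "M' *v v = 0" using M'x[of v] vv by simp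
    have orthM': "(M *v v) \<bullet> (M' *v x) = 0" for x
      unfolding M'x by (rule orth) (simp add: inner_diff_right vv)
    have sub1: "range (\<lambda>x. M' *v x) \<subseteq> range (\<lambda>x. M *v x)"
      using M'x by auto
    have notin: "M *v v \<notin> range (\<lambda>x. M' *v x)"
    proof
      assume "M *v v \<in> range (\<lambda>x. M' *v x)"
      then obtain x where "M *v v = M' *v x" by auto
      then have "(M *v v) \<bullet> (M *v v) = 0" using orthM'[of x] by simp
      then show False using \<open>\<sigma> > 0\<close> by (simp add: \<sigma>_def)
    qed
    have subsp: "subspace (range (\<lambda>x. M' *v x))" "subspace (range (\<lambda>x. M *v x))"
      by (metis linear_subspace_image matrix_vector_mul_linear subspace_UNIV)+
    have "span (range (\<lambda>x. M' *v x)) \<subset> span (range (\<lambda>x. M *v x))"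
    proof -
      have e1: "span (range (\<lambda>x. M' *v x)) = range (\<lambda>x. M' *v x)" using subsp(1) by (simp add: span_eq_iff)
      have e2: "span (range (\<lambda>x. M *v x)) = range (\<lambda>x. M *v x)" using subsp(2) by (simp add: span_eq_iff)
      show ?thesis unfolding e1 e2 using sub1 notin by blast
    qed
    then have "dim (range (\<lambda>x. M' *v x)) < dim (range (\<lambda>x. M *v x))"
      by (rule dim_psubset)
    then have "dim (range (\<lambda>x. M' *v x)) < d" using less.prems by linarith
    then obtain r' u' s' v' where svd': "compact_svd M' r' u' s' v'"
      using less.IH[OF _ order_refl] by blast
    note sp = svd_parts[OF svd']
    define u where "u = (1 / \<sigma>) *\<^sub>R (M *v v)"
    have uu: "u \<bullet> u = 1" using \<open>\<sigma> > 0\<close>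
      by (simp add: u_def \<sigma>_def power2_norm_eq_inner[symmetric] power2_eq_square)
    have uu': "u \<bullet> u' l = 0" if "l < r'" for l
    proof -
      have "u' l = (1 / s' l) *\<^sub>R (M' *v v' l)"
        using svd_mult(1)[OF svd' that] sp(3)[OF that] by simp
      then show ?thesis using orthM' by (simp add: u_def)
    qed
    have vv': "v \<bullet> v' l = 0" if "l < r'" for l
      using svd_mult(2)[OF svd' that, of v] M'v sp(3)[OF that] by (simp add: inner_commute)
    define U where "U = (\<lambda>l. if l < r' then u' l else u)"
    define V where "V = (\<lambda>l. if l < r' then v' l else v)"
    define S where "S = (\<lambda>l. if l < r' then s' l else \<sigma>)"
    have "compact_svd M (Suc r') U S V"
      unfolding compact_svd_def
    proof (intro conjI allI impI)
      fix l l' assume l: "l < Suc r'" and l': "l' < Suc r'"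
      consider "l < r'" "l' < r'" | "l < r'" "l' = r'" | "l = r'" "l' < r'" | "l = r'" "l' = r'"
        using l l' by linarith
      then show "U l \<bullet> U l' = (if l = l' then 1 else 0)"
      proof cases
        case 1 then show ?thesis using sp(1) by (simp add: U_def orthon_def)
      next
        case 2 then show ?thesis using uu' by (simp add: U_def inner_commute)
      next
        case 3 then show ?thesis using uu' by (simp add: U_def)
      next
        case 4 then show ?thesis using uu by (simp add: U_def)
      qed
    next
      fix l l' assume l: "l < Suc r'" and l': "l' < Suc r'"
      consider "l < r'" "l' < r'" | "l < r'" "l' = r'" | "l = r'" "l' < r'" | "l = r'" "l' = r'"
        using l l' by linarith
      then show "V l \<bullet> V l' = (if l = l' then 1 else 0)"
      proof cases
        case 1 then show ?thesis using sp(2) by (simp add: V_def orthon_def)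
      next
        case 2 then show ?thesis using vv' by (simp add: V_def inner_commute)
      next
        case 3 then show ?thesis using vv' by (simp add: V_def)
      next
        case 4 then show ?thesis using vv by (simp add: V_def)
      qed
    next
      fix l assume "l < Suc r'" then show "S l > 0" using sp(3) \<open>\<sigma> > 0\<close> by (auto simp: S_def)
    next
      have "(\<Sum>l<Suc r'. S l *\<^sub>R outer (U l) (V l)) = (\<Sum>l<r'. s' l *\<^sub>R outer (u' l) (v' l)) + \<sigma> *\<^sub>R outer u v"
        by (simp add: S_def U_def V_def)
      also have "\<dots> = M' + outer (M *v v) v"
        using sp(4) \<open>\<sigma> > 0\<close> by (simp add: u_def outer_scale_left)
      also have "\<dots> = M" by (simp add: M'_def)
      finally show "M = (\<Sum>l<Suc r'. S l *\<^sub>R outer (U l) (V l))" by simp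
    qed
    then show ?thesis by blast
  qed
qed

lemma svd_exists:
  fixes M :: "real^'t::finite^'n::finite"
  shows "\<exists>r u s v. compact_svd M r u s v"
  using svd_exists_aux[OF order_refl] .



lemma nn_bound:
  fixes N :: "real^'t::finite^'n::finite"
  assumes "N = (\<Sum>k<p. outer (x k) (y k))"
  shows "nuclear_norm N \<le> (\<Sum>k<p. norm (x k) * norm (y k))"
proof -
  obtain r u s v where svd: "compact_svd N r u s v" using svd_exists by blast
  show ?thesis using nn_eq[OF svd] atomic_bound[OF svd assms] by simp
qed

lemma norm_pert:
  fixes v a :: "'a::real_inner"
  assumes s: "s > 0" and nv: "norm v = 1"
  shows "norm (s *\<^sub>R v + t *\<^sub>R a) \<le> s + t * (v \<bullet> a) + t\<^sup>2 * (norm a)\<^sup>2 / (2 * s)"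
proof -
  define z where "z = s *\<^sub>R v + t *\<^sub>R a"
  have z2: "(norm z)\<^sup>2 = s\<^sup>2 + 2 * t * (s * (v \<bullet> a)) + t\<^sup>2 * (norm a)\<^sup>2"
    unfolding z_def norm_add_scale2 using s nv by simp
  have "0 \<le> (norm z - s)\<^sup>2" by simp
  then have "2 * s * norm z \<le> (norm z)\<^sup>2 + s\<^sup>2" by (simp add: power2_diff mult_ac)
  then have "2 * s * norm z \<le> 2 * s * (s + t * (v \<bullet> a) + t\<^sup>2 * (norm a)\<^sup>2 / (2 * s))"
    using z2 s by (simp add: algebra_simps power2_eq_square)
  then have "norm z \<le> s + t * (v \<bullet> a) + t\<^sup>2 * (norm a)\<^sup>2 / (2 * s)"
    using s by (simp add: mult_le_cancel_left_pos)
  then show ?thesis by (simp add: z_def)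
qed

lemma sum_if_delta:
  fixes f :: "nat \<Rightarrow> 'b::comm_monoid_add"
  assumes "l < r"
  shows "(\<Sum>k<r. if k = l then f k else 0) = f l"
  using assms by simp

lemma pert_left:
  fixes M :: "real^'t::finite^'n::finite"
  assumes svd: "compact_svd M r u s v" and l: "l < r"
  shows "nuclear_norm (M + t *\<^sub>R outer (u l) a)
         \<le> nuclear_norm M + t * (v l \<bullet> a) + t\<^sup>2 * ((norm a)\<^sup>2 / (2 * s l))"
proof -
  note sp = svd_parts[OF svd]
  define y where "y = (\<lambda>k. s k *\<^sub>R v k + (if k = l then t *\<^sub>R a else 0))"
  have nu: "norm (u k) = 1" "norm (v k) = 1" if "k < r" for k
    using sp(1,2) that by (auto simp: orthon_def norm_eq_sqrt_inner)
  have dec: "M + t *\<^sub>R outer (u l) a = (\<Sum>k<r. outer (u k) (y k))"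
  proof -
    have e: "outer (u k) (y k) = s k *\<^sub>R outer (u k) (v k) + (if k = l then t *\<^sub>R outer (u l) a else 0)" for k
      by (simp add: y_def outer_add_right outer_scale_right)
    show ?thesis unfolding e sum.distrib using l by (simp add: sp(4))
  qed
  have "nuclear_norm (M + t *\<^sub>R outer (u l) a) \<le> (\<Sum>k<r. norm (u k) * norm (y k))"
    by (rule nn_bound[OF dec])
  also have "\<dots> \<le> (\<Sum>k<r. s k + (if k = l then t * (v l \<bullet> a) + t\<^sup>2 * (norm a)\<^sup>2 / (2 * s l) else 0))"
  proof (rule sum_mono)
    fix k assume k: "k \<in> {..<r}"
    show "norm (u k) * norm (y k) \<le> s k + (if k = l then t * (v l \<bullet> a) + t\<^sup>2 * (norm a)\<^sup>2 / (2 * s l) else 0)"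
    proof (cases "k = l")
      case True
      then show ?thesis using norm_pert[OF sp(3)[OF l] nu(2)[OF l], where t=t and a=a] nu k l by (simp add: y_def)
    next
      case False
      then show ?thesis using nu k sp(3)[of k] by (simp add: y_def)
    qed
  qed
  also have "\<dots> = (\<Sum>k<r. s k) + (t * (v l \<bullet> a) + t\<^sup>2 * (norm a)\<^sup>2 / (2 * s l))"
    unfolding sum.distrib using l by simp
  finally show ?thesis using nn_eq[OF svd] by simp
qed

lemma pert_right:
  fixes M :: "real^'t::finite^'n::finite"
  assumes svd: "compact_svd M r u s v" and l: "l < r"
  shows "nuclear_norm (M + t *\<^sub>R outer b (v l))
         \<le> nuclear_norm M + t * (u l \<bullet> b) + t\<^sup>2 * ((norm b)\<^sup>2 / (2 * s l))"
proof -
  note sp = svd_parts[OF svd]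
  define x where "x = (\<lambda>k. s k *\<^sub>R u k + (if k = l then t *\<^sub>R b else 0))"
  have nu: "norm (u k) = 1" "norm (v k) = 1" if "k < r" for k
    using sp(1,2) that by (auto simp: orthon_def norm_eq_sqrt_inner)
  have dec: "M + t *\<^sub>R outer b (v l) = (\<Sum>k<r. outer (x k) (v k))"
  proof -
    have e: "outer (x k) (v k) = s k *\<^sub>R outer (u k) (v k) + (if k = l then t *\<^sub>R outer b (v l) else 0)" for k
      by (simp add: x_def outer_add_left outer_scale_left)
    show ?thesis unfolding e sum.distrib using l by (simp add: sp(4))
  qed
  have "nuclear_norm (M + t *\<^sub>R outer b (v l)) \<le> (\<Sum>k<r. norm (x k) * norm (v k))"
    by (rule nn_bound[OF dec])
  also have "\<dots> \<le> (\<Sum>k<r. s k + (if k = l then t * (u l \<bullet> b) + t\<^sup>2 * (norm b)\<^sup>2 / (2 * s l) else 0))"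
  proof (rule sum_mono)
    fix k assume k: "k \<in> {..<r}"
    show "norm (x k) * norm (v k) \<le> s k + (if k = l then t * (u l \<bullet> b) + t\<^sup>2 * (norm b)\<^sup>2 / (2 * s l) else 0)"
    proof (cases "k = l")
      case True
      then show ?thesis using norm_pert[OF sp(3)[OF l] nu(1)[OF l], where t=t and a=b] nu k l by (simp add: x_def)
    next
      case False
      then show ?thesis using nu k sp(3)[of k] by (simp add: x_def)
    qed
  qed
  also have "\<dots> = (\<Sum>k<r. s k) + (t * (u l \<bullet> b) + t\<^sup>2 * (norm b)\<^sup>2 / (2 * s l))"
    unfolding sum.distrib using l by simp
  finally show ?thesis using nn_eq[OF svd] by simp
qed

lemma orth_compl_subspace: "subspace (orth_compl S)"
  by (auto simp: subspace_def orth_compl_def inner_add_left)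

lemma proj_char:
  fixes A :: "'a::real_inner set"
  assumes A: "subspace A" and p: "p \<in> A" and px: "\<forall>y\<in>A. (x - p) \<bullet> y = 0"
  shows "orth_proj A x = p"
  unfolding orth_proj_def
proof (rule the_equality)
  show "p \<in> A \<and> (\<forall>y\<in>A. (x - p) \<bullet> y = 0)" using p px by blast
next
  fix q assume q: "q \<in> A \<and> (\<forall>y\<in>A. (x - q) \<bullet> y = 0)"
  have d: "p - q \<in> A" using A p q by (simp add: subspace_diff)
  have "(p - q) \<bullet> (p - q) = (x - q) \<bullet> (p - q) - (x - p) \<bullet> (p - q)"
    by (simp add: inner_diff_left)
  also have "\<dots> = 0" using q px d by simp
  finally show "q = p" by simp
qed

lemma proj_exists:
  fixes A :: "'a::euclidean_space set"
  assumes A: "subspace A"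
  shows "orth_proj A x \<in> A \<and> (\<forall>y\<in>A. (x - orth_proj A x) \<bullet> y = 0)"
proof -
  obtain y z where y: "y \<in> span A" and z: "\<And>w. w \<in> span A \<Longrightarrow> orthogonal z w" and xyz: "x = y + z"
    using orthogonal_subspace_decomp_exists[of A x] by blast
  have sA: "span A = A" using A by (simp add: span_eq_iff)
  have "orth_proj A x = y"
    by (rule proj_char[OF A]) (use y z xyz sA in \<open>auto simp: orthogonal_def\<close>)
  then show ?thesis using y z xyz sA by (auto simp: orthogonal_def)
qed

lemma tangent_memI:
  assumes "x = (\<Sum>l<r. outer (U l) (a l)) + (\<Sum>l<r. outer (b l) (V l)) + outer w ones"
  shows "x \<in> tangent_T r U V"
  using assms unfolding tangent_T_def by blast



theorem lemma1:
  fixes Obs Mstar Ehat Mhat :: "real^'t::finite^'n::finite"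
    and Z :: "'k::finite \<Rightarrow> real^'t^'n"
    and taustar tauhat :: "real^'k"
    and mhat :: "real^'n"
    and lam :: real
    and r :: nat and U :: "nat \<Rightarrow> real^'n" and S :: "nat \<Rightarrow> real" and V :: "nat \<Rightarrow> real^'t"
  assumes model: "Obs = Mstar + (\<Sum>i\<in>UNIV. taustar $ i *\<^sub>R Z i) + Ehat"
    and lam: "lam > 0"
    and minimizer: "\<forall>M m \<tau>. objective Obs Z lam Mhat mhat tauhat \<le> objective Obs Z lam M m \<tau>"
    and svd: "compact_svd Mhat r U S V"
  shows "(\<chi> i j. orth_proj (orth_compl (tangent_T r U V)) (Z i)
                  \<bullet> orth_proj (orth_compl (tangent_T r U V)) (Z j)) *v (tauhat - taustar)
         = (\<chi> i. lam * (Z i \<bullet> (\<Sum>l<r. outer (U l) (V l))))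
         + (\<chi> i. Z i \<bullet> orth_proj (orth_compl (tangent_T r U V)) Ehat)
         + (\<chi> i. Z i \<bullet> orth_proj (orth_compl (tangent_T r U V)) Mstar)"
proof -
  note sp = svd_parts[OF svd]
  define R where "R = Obs - Mhat - outer mhat ones - (\<Sum>i\<in>UNIV. tauhat $ i *\<^sub>R Z i)"
  have key: "R \<bullet> (H + outer w ones + (\<Sum>i\<in>UNIV. \<delta> $ i *\<^sub>R Z i)) = lam * c"
    if nnb: "\<And>t. nuclear_norm (Mhat + t *\<^sub>R H) \<le> nuclear_norm Mhat + t * c + t\<^sup>2 * K"
    for H w \<delta> c K
  proof -
    define G where "G = H + outer w ones + (\<Sum>i\<in>UNIV. \<delta> $ i *\<^sub>R Z i)"
    have "lam * c - R \<bullet> G = 0"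
    proof (rule quad_zero[where K = "(norm G)\<^sup>2 / 2 + lam * K"])
      fix t :: real
      have res: "Obs - (Mhat + t *\<^sub>R H) - outer (mhat + t *\<^sub>R w) ones
                 - (\<Sum>i\<in>UNIV. (tauhat + t *\<^sub>R \<delta>) $ i *\<^sub>R Z i) = R + (- t) *\<^sub>R G"
        by (simp add: R_def G_def outer_add_left outer_scale_left scaleR_add_left sum.distrib
            scaleR_sum_right algebra_simps sum_negf)
      have "objective Obs Z lam Mhat mhat tauhat
            \<le> objective Obs Z lam (Mhat + t *\<^sub>R H) (mhat + t *\<^sub>R w) (tauhat + t *\<^sub>R \<delta>)"
        using minimizer by blast
      then have "(1/2) * (norm R)\<^sup>2 + lam * nuclear_norm Mhat
                 \<le> (1/2) * (norm (R + (- t) *\<^sub>R G))\<^sup>2 + lam * nuclear_norm (Mhat + t *\<^sub>R H)"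
        unfolding objective_def res by (simp add: R_def)
      also have "\<dots> \<le> (1/2) * (norm (R + (- t) *\<^sub>R G))\<^sup>2 + lam * (nuclear_norm Mhat + t * c + t\<^sup>2 * K)"
        using nnb[of t] lam by simp
      also have "(norm (R + (- t) *\<^sub>R G))\<^sup>2 = (norm R)\<^sup>2 - 2 * t * (R \<bullet> G) + t\<^sup>2 * (norm G)\<^sup>2"
        using norm_add_scale2[of R "- t" G] by simp
      finally show "0 \<le> t * (lam * c - R \<bullet> G) + t\<^sup>2 * ((norm G)\<^sup>2 / 2 + lam * K)"
        by (simp add: algebra_simps)
    qed
    then show ?thesis by (simp add: G_def)
  qed
  have nn0: "nuclear_norm (Mhat + t *\<^sub>R 0) \<le> nuclear_norm Mhat + t * 0 + t\<^sup>2 * 0" for t :: real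
    by simp
  have RZ: "R \<bullet> Z i = 0" for i
  proof -
    have "(\<Sum>j\<in>UNIV. axis i (1::real) $ j *\<^sub>R Z j) = Z i"
      by (simp add: axis_def if_distrib[of "\<lambda>x. x *\<^sub>R _"] sum.delta' cong: if_cong)
    then show ?thesis using key[OF nn0, of 0 "axis i 1"] by simp
  qed
  have Rw: "R \<bullet> outer w ones = 0" for w
    using key[OF nn0, of w 0] by simp
  have Ra: "R \<bullet> outer (U l) a = lam * (V l \<bullet> a)" if l: "l < r" for l a
    using key[OF pert_left[OF svd l, where a=a], of 0 0] by simp
  have Rb: "R \<bullet> outer b (V l) = lam * (U l \<bullet> b)" if l: "l < r" for l b
    using key[OF pert_right[OF svd l, where b=b], of 0 0] by simp
  have Vones: "V l \<bullet> ones = 0" if l: "l < r" for l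
    using Ra[OF l, of ones] Rw[of "U l"] lam by simp
  define W where "W = (\<Sum>l<r. outer (U l) (V l))"
  define Tt where "Tt = tangent_T r U V"
  define A where "A = orth_compl Tt"
  have subA: "subspace A" unfolding A_def by (rule orth_compl_subspace)
  have WT: "W \<in> Tt"
    unfolding Tt_def by (rule tangent_memI[where a = V and b = "\<lambda>_. 0" and w = 0]) (simp add: W_def)
  have NT: "Mhat + outer mhat ones \<in> Tt"
    unfolding Tt_def
    by (rule tangent_memI[where a = "\<lambda>l. S l *\<^sub>R V l" and b = "\<lambda>_. 0" and w = mhat])
      (simp add: sp(4) outer_scale_right)
  have perpA: "y \<bullet> x = 0" if "y \<in> A" "x \<in> Tt" for x y
    using that by (simp add: A_def orth_compl_def)
  have RW_A: "R - lam *\<^sub>R W \<in> A"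
    unfolding A_def orth_compl_def
  proof (clarify)
    fix x assume "x \<in> Tt"
    then obtain a b w where x: "x = (\<Sum>l<r. outer (U l) (a l)) + (\<Sum>l<r. outer (b l) (V l)) + outer w ones"
      unfolding Tt_def tangent_T_def by blast
    have R1: "R \<bullet> x = (\<Sum>l<r. lam * (V l \<bullet> a l)) + (\<Sum>l<r. lam * (U l \<bullet> b l))"
      using Ra Rb Rw by (simp add: x inner_add_right inner_sum_right)
    have Wa: "W \<bullet> outer (U l) (a l) = V l \<bullet> a l" if l: "l < r" for l
    proof -
      have "W \<bullet> outer (U l) (a l) = (\<Sum>l'<r. (U l' \<bullet> U l) * (V l' \<bullet> a l))"
        by (simp add: W_def inner_sum_left outer_inner)
      also have "\<dots> = V l \<bullet> a l" by (rule orthon_sum_left[OF sp(1) l])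
      finally show ?thesis .
    qed
    have Wb: "W \<bullet> outer (b l) (V l) = U l \<bullet> b l" if l: "l < r" for l
    proof -
      have "W \<bullet> outer (b l) (V l) = (\<Sum>l'<r. (V l' \<bullet> V l) * (U l' \<bullet> b l))"
        by (simp add: W_def inner_sum_left outer_inner mult.commute)
      also have "\<dots> = U l \<bullet> b l" by (rule orthon_sum_left[OF sp(2) l])
      finally show ?thesis .
    qed
    have Ww: "W \<bullet> outer w ones = 0"
      using Vones by (simp add: W_def inner_sum_left outer_inner)
    have W1: "W \<bullet> x = (\<Sum>l<r. V l \<bullet> a l) + (\<Sum>l<r. U l \<bullet> b l)"
      using Wa Wb Ww by (simp add: x inner_add_right inner_sum_right)
    show "(R - lam *\<^sub>R W) \<bullet> x = 0"
      using R1 W1 by (simp add: inner_diff_left sum_distrib_left[symmetric] algebra_simps)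
  qed
  define P where "P = orth_proj A"
  have Pp: "P x \<in> A" "\<And>y. y \<in> A \<Longrightarrow> (x - P x) \<bullet> y = 0" for x
    using proj_exists[OF subA, of x] by (auto simp: P_def)
  have PR: "P R = R - lam *\<^sub>R W"
    unfolding P_def
  proof (rule proj_char[OF subA RW_A], clarify)
    fix y assume "y \<in> A"
    then show "(R - (R - lam *\<^sub>R W)) \<bullet> y = 0"
      using perpA[OF \<open>y \<in> A\<close> WT] by (simp add: inner_commute)
  qed
  define c where "c = tauhat - taustar"
  have sumZ: "(\<Sum>j\<in>UNIV. c $ j *\<^sub>R Z j) = Mstar + Ehat - (Mhat + outer mhat ones) - R"
    by (simp add: c_def R_def model scaleR_left_diff_distrib sum_subtractf algebra_simps)
  have X: "(\<Sum>j\<in>UNIV. c $ j *\<^sub>R P (Z j)) = P Mstar + P Ehat - (R - lam *\<^sub>R W)"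
  proof -
    have "P (\<Sum>j\<in>UNIV. c $ j *\<^sub>R Z j) = (\<Sum>j\<in>UNIV. c $ j *\<^sub>R P (Z j))"
      unfolding P_def
    proof (rule proj_char[OF subA])
      show "(\<Sum>j\<in>UNIV. c $ j *\<^sub>R orth_proj A (Z j)) \<in> A"
        using Pp(1) by (intro subspace_sum[OF subA] subspace_scale[OF subA]) (simp add: P_def)
      show "\<forall>y\<in>A. ((\<Sum>j\<in>UNIV. c $ j *\<^sub>R Z j) - (\<Sum>j\<in>UNIV. c $ j *\<^sub>R orth_proj A (Z j))) \<bullet> y = 0"
      proof
        fix y assume y: "y \<in> A"
        have "((\<Sum>j\<in>UNIV. c $ j *\<^sub>R Z j) - (\<Sum>j\<in>UNIV. c $ j *\<^sub>R orth_proj A (Z j))) \<bullet> y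
              = (\<Sum>j\<in>UNIV. c $ j * ((Z j - P (Z j)) \<bullet> y))"
          by (simp add: P_def inner_diff_left inner_sum_left sum_subtractf algebra_simps)
        also have "\<dots> = 0" using Pp(2)[OF y] by simp
        finally show "((\<Sum>j\<in>UNIV. c $ j *\<^sub>R Z j) - (\<Sum>j\<in>UNIV. c $ j *\<^sub>R orth_proj A (Z j))) \<bullet> y = 0" .
      qed
    qed
    moreover have "P (\<Sum>j\<in>UNIV. c $ j *\<^sub>R Z j) = P Mstar + P Ehat - (R - lam *\<^sub>R W)"
      unfolding P_def
    proof (rule proj_char[OF subA])
      show "orth_proj A Mstar + orth_proj A Ehat - (R - lam *\<^sub>R W) \<in> A"
        using Pp(1) RW_A subA by (simp add: P_def subspace_add subspace_diff)
      show "\<forall>y\<in>A. ((\<Sum>j\<in>UNIV. c $ j *\<^sub>R Z j) - (orth_proj A Mstar + orth_proj A Ehat - (R - lam *\<^sub>R W))) \<bullet> y = 0"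
      proof
        fix y assume y: "y \<in> A"
        have e: "(\<Sum>j\<in>UNIV. c $ j *\<^sub>R Z j) - (orth_proj A Mstar + orth_proj A Ehat - (R - lam *\<^sub>R W))
              = (Mstar - P Mstar) + (Ehat - P Ehat) - (Mhat + outer mhat ones) - lam *\<^sub>R W"
          by (simp add: sumZ P_def algebra_simps)
        have f: "y \<bullet> (Mhat + outer mhat ones) = 0" "y \<bullet> W = 0"
          "y \<bullet> (Mstar - P Mstar) = 0" "y \<bullet> (Ehat - P Ehat) = 0"
          using perpA[OF y NT] perpA[OF y WT] Pp(2)[OF y, of Mstar] Pp(2)[OF y, of Ehat]
          by (auto simp: inner_commute)
        show "((\<Sum>j\<in>UNIV. c $ j *\<^sub>R Z j) - (orth_proj A Mstar + orth_proj A Ehat - (R - lam *\<^sub>R W))) \<bullet> y = 0"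
        proof -
          have g: "\<And>a b d w. y \<bullet> a = 0 \<Longrightarrow> y \<bullet> b = 0 \<Longrightarrow> y \<bullet> d = 0 \<Longrightarrow> y \<bullet> w = 0
                    \<Longrightarrow> y \<bullet> (a + b - d - lam *\<^sub>R w) = 0"
            by (simp add: inner_diff_right inner_add_right)
          show ?thesis unfolding e by (subst inner_commute) (rule g[OF f(3) f(4) f(1) f(2)])
        qed
      qed
    qed
    ultimately show ?thesis by simp
  qed
  have PZ: "P (Z i) \<bullet> P (Z j) = Z i \<bullet> P (Z j)" for i j
  proof -
    have "(Z i - P (Z i)) \<bullet> P (Z j) = 0" using Pp(2)[OF Pp(1)] .
    then show ?thesis by (simp add: inner_diff_left)
  qed
  have comp: "(\<Sum>j\<in>UNIV. (P (Z i) \<bullet> P (Z j)) * c $ j)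
        = lam * (Z i \<bullet> W) + Z i \<bullet> P Ehat + Z i \<bullet> P Mstar" for i
  proof -
    have "(\<Sum>j\<in>UNIV. (P (Z i) \<bullet> P (Z j)) * c $ j) = Z i \<bullet> (\<Sum>j\<in>UNIV. c $ j *\<^sub>R P (Z j))"
      by (simp add: PZ inner_sum_right mult.commute)
    also have "\<dots> = Z i \<bullet> (P Mstar + P Ehat - (R - lam *\<^sub>R W))" by (simp add: X)
    also have "\<dots> = Z i \<bullet> P Mstar + Z i \<bullet> P Ehat - Z i \<bullet> R + lam * (Z i \<bullet> W)"
      by (simp add: inner_diff_right inner_add_right)
    also have "Z i \<bullet> R = 0" using RZ[of i] by (simp add: inner_commute)
    finally show ?thesis by simp
  qed
  show ?thesis
    using comp
    by (simp add: vec_eq_iff matrix_vector_mult_def P_def A_def Tt_def W_def c_def)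
qed


end
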